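(* Assume that $\hat F$ is differentiable on $\mathcal F$ and $\|\hat F'(y)-\hat F'(x)\|_F\le L_{\hat F}\|y-x\|$ for all $x,y\in\mathcal F$ (Assumption 1). Let $\{x_k\}$ be generated by Scheme 1 with $\tau_k=\hat f_1(x_k)$ and $\varepsilon_k=\varepsilon\ge 0$ for all $k$. Then for every $k\in\mathbb N$ and every $r>0$: $$\frac{8L_{\hat F}^2}{L}\Big(\varepsilon+\frac{\hat f_1(x_0)-\hat f_1(x_k)}{k}\Big)\ \ge\ \min_{i\in\{0,\dots,k-1\}}\Big\|2L_{\hat F}\big(T_{2L_{\hat F},\hat f_1(x_i)}(x_i)-x_i\big)\Big\|^2,$$ $$L_{\hat F}\Big(\varepsilon+\frac{\hat f_1(x_0)-\hat f_1(x_k)}{k}\Big)\ \ge\ \min_{i\in\{0,\dots,k-1\}} 2(L_{\hat F}r)^2\,\varkappa\!\Big(\frac{\Delta_r(x_i)}{4\hat f_1(x_i)L_{\hat F}r^2}\Big),$$ where $\varkappa(t)=\frac{t^2}{2}$ for $t\in[0,1]$ and $\varkappa(t)=t-\frac12$ for $t>1$.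
   Context: Let $F:\mathbb R^n\to\mathbb R^m$ be a smooth map, $\hat F(x)=\frac{1}{\sqrt m}F(x)$ with Jacobian $\hat F'(x)\in\mathbb R^{m\times n}$. All vector norms are Euclidean, $\|\cdot\|$ on matrices is the spectral norm, $\|\cdot\|_F$ the Frobenius norm. Set $\hat f_1(x)=\|\hat F(x)\|$, $\hat f_2=\hat f_1^2$, $\phi(x,y)=\|\hat F(x)+\hat F'(x)(y-x)\|$, and for $L>0,\tau>0$ the local model $\psi_{x,L,\tau}(y)=\frac{\tau}{2}+\frac{\phi(x,y)^2}{2\tau}+\frac L2\|y-x\|^2$, with $T_{L,\tau}(x)=\arg\min_{y\in\mathbb R^n}\psi_{x,L,\tau}(y)$. For $r>0$, $\Delta_r(x)=\hat f_2(x)-\min_y\{\phi(x,y)^2:\|y-x\|\le r\}$. $\mathcal F\subseteq\mathbb R^n$ is a closed convex set with nonempty interior; level sets are $\mathcal L(v)=\{x:\hat f_1(x)\le v\}$; it is assumed throughout that $\mathcal L(\hat f_1(x_0))\subseteq\mathcal F$ and that $\mathcal F$ is large enough that the whole generated sequence (with nonincreasing $\hat f_1$ values) lies in $\mathcal F$. Scheme 1 (input: $x_0$ with $\mathcal L(\hat f_1(x_0))\subseteq\mathcal F$; a rule choosing $\varepsilon_k\ge0$ and $\tau_k>0$; a constant $L\in(0,L_{\hat F}]$, $L_0=L$). For $k=0,1,\dots$: (1) choose $\tau_k,\varepsilon_k$; (2) compute $x_{k+1}$ with $\psi_{x_k,L_k,\tau_k}(x_{k+1})-\psi_{x_k,L_k,\tau_k}(T_{L_k,\tau_k}(x_k))\le\varepsilon_k$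 and $\hat f_1(x_k)\ge\psi_{x_k,L_k,\tau_k}(x_{k+1})$; (3) if $\hat f_1(x_{k+1})>\psi_{x_k,L_k,\tau_k}(x_{k+1})$, set $L_k:=\min\{2L_k,2L_{\hat F}\}$ and return to (1); (4) set $L_{k+1}=\max\{L_k/2,L\}$. *)

theory Defs
  imports "HOL-Analysis.Analysis"
begin

definition Fhat :: "(real^'n \<Rightarrow> real^'m) \<Rightarrow> real^'n \<Rightarrow> real^'m" where
  "Fhat F x = (1 / sqrt (real CARD('m))) *\<^sub>R F x"

definition Jac :: "(real^'n \<Rightarrow> real^'m) \<Rightarrow> real^'n \<Rightarrow> real^'n^'m" where
  "Jac F x = matrix (frechet_derivative (Fhat F) (at x))"

definition frob :: "real^'n^'m \<Rightarrow> real" where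
  "frob A = sqrt (\<Sum>i\<in>UNIV. \<Sum>j\<in>UNIV. (A $ i $ j)\<^sup>2)"

definition f1 :: "(real^'n \<Rightarrow> real^'m) \<Rightarrow> real^'n \<Rightarrow> real" where
  "f1 F x = norm (Fhat F x)"

definition f2 :: "(real^'n \<Rightarrow> real^'m) \<Rightarrow> real^'n \<Rightarrow> real" where
  "f2 F x = (f1 F x)\<^sup>2"

definition phi :: "(real^'n \<Rightarrow> real^'m) \<Rightarrow> real^'n \<Rightarrow> real^'n \<Rightarrow> real" where
  "phi F x y = norm (Fhat F x + Jac F x *v (y - x))"

definition psi :: "(real^'n \<Rightarrow> real^'m) \<Rightarrow> real \<Rightarrow> real \<Rightarrow> real^'n \<Rightarrow> real^'n \<Rightarrow> real" where
  "psi F L tau x y = tau / 2 + (phi F x y)\<^sup>2 / (2 * tau) + L / 2 * (norm (y - x))\<^sup>2"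

definition T :: "(real^'n \<Rightarrow> real^'m) \<Rightarrow> real \<Rightarrow> real \<Rightarrow> real^'n \<Rightarrow> real^'n" where
  "T F L tau x = arg_min (psi F L tau x) (\<lambda>_. True)"

definition Delta :: "(real^'n \<Rightarrow> real^'m) \<Rightarrow> real \<Rightarrow> real^'n \<Rightarrow> real" where
  "Delta F r x = f2 F x - (INF y\<in>cball x r. (phi F x y)\<^sup>2)"

definition kappa :: "real \<Rightarrow> real" where
  "kappa t = (if t \<le> 1 then t\<^sup>2 / 2 else t - 1 / 2)"

definition step2_ok :: "(real^'n \<Rightarrow> real^'m) \<Rightarrow> real \<Rightarrow> real \<Rightarrow> real \<Rightarrow> real^'n \<Rightarrow> real^'n \<Rightarrow> bool" where
  "step2_ok F L tau eps x y \<longleftrightarrow>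
     psi F L tau x y - psi F L tau x (T F L tau x) \<le> eps \<and> f1 F x \<ge> psi F L tau x y"

text \<open>Ls k is the value of L_k when iteration k starts (Ls 0 = L); the i-th trial of
  iteration k uses the constant obtained by applying  l \<mapsto> min (2l) (2 LF)  i times;
  trials i < j are rejected by the test of step (3), trial j is accepted and produces x_(k+1).\<close>
definition scheme1 :: "(real^'n \<Rightarrow> real^'m) \<Rightarrow> real \<Rightarrow> real \<Rightarrow> real \<Rightarrow> (nat \<Rightarrow> real^'n) \<Rightarrow> bool" where
  "scheme1 F L LF eps xs \<longleftrightarrow>
    (\<exists>Ls :: nat \<Rightarrow> real. Ls 0 = L \<and>
      (\<forall>k. 0 < f1 F (xs k) \<and>
        (\<exists>j::nat.
          (\<forall>i<j. \<exists>z. step2_ok F (((\<lambda>l. min (2 * l) (2 * LF)) ^^ i) (Ls k)) (f1 F (xs k)) eps (xs k) z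
                    \<and> f1 F z > psi F (((\<lambda>l. min (2 * l) (2 * LF)) ^^ i) (Ls k)) (f1 F (xs k)) (xs k) z) \<and>
          step2_ok F (((\<lambda>l. min (2 * l) (2 * LF)) ^^ j) (Ls k)) (f1 F (xs k)) eps (xs k) (xs (Suc k)) \<and>
          f1 F (xs (Suc k)) \<le> psi F (((\<lambda>l. min (2 * l) (2 * LF)) ^^ j) (Ls k)) (f1 F (xs k)) (xs k) (xs (Suc k)) \<and>
          Ls (Suc k) = max ((((\<lambda>l. min (2 * l) (2 * LF)) ^^ j) (Ls k)) / 2) L)))"

end

theory Submission
  imports Defs
begin

lemma norm_comb_sq:
  fixes u v :: "'a::real_inner"
  shows "(norm (t *\<^sub>R u + (1 - t) *\<^sub>R v))\<^sup>2
     = t * (norm u)\<^sup>2 + (1 - t) * (norm v)\<^sup>2 - t * (1 - t) * (norm (u - v))\<^sup>2"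
  by (simp add: power2_norm_eq_inner inner_add_left inner_add_right inner_diff_left
      inner_diff_right inner_commute algebra_simps)

lemma psi_ge:
  assumes "0 < tau" "0 \<le> Lc"
  shows "Lc / 2 * (norm (y - x))\<^sup>2 \<le> psi F Lc tau x y"
proof -
  have "0 \<le> tau / 2" using assms by simp
  moreover have "0 \<le> (phi F x y)\<^sup>2 / (2 * tau)" using assms by (intro divide_nonneg_pos) auto
  ultimately show ?thesis unfolding psi_def by linarith
qed

lemma psi_at_x:
  assumes "0 < f1 F x"
  shows "psi F Lc (f1 F x) x x = f1 F x"
proof -
  have "phi F x x = f1 F x" by (simp add: phi_def f1_def)
  then show ?thesis using assms unfolding psi_def by (simp add: power2_eq_square)
qed

lemma psi_cont: "0 < tau \<Longrightarrow> continuous_on UNIV (psi F Lc tau x)"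
  unfolding psi_def phi_def
  by (intro continuous_intros matrix_vector_mult_linear_continuous_on[THEN continuous_on_compose2]) auto

lemma psi_mono_L:
  assumes "Lc \<le> Lc'"
  shows "psi F Lc tau x y \<le> psi F Lc' tau x y"
  using assms unfolding psi_def by (simp add: mult_right_mono)

lemma lin_aux:
  fixes a b c t :: real
  shows "a \<le> t*a1 + (1-t)*a2 \<Longrightarrow> b \<le> t*b1+(1-t)*b2 \<Longrightarrow> c = t*c1+(1-t)*c2 - e \<Longrightarrow>
    a + b + c \<le> t*(a1+b1+c1) + (1-t)*(a2+b2+c2) - e"
  by (simp add: algebra_simps)

lemma psi_comb:
  assumes "0 < tau" "0 \<le> t" "t \<le> 1"
  shows "psi F Lc tau x (t *\<^sub>R y + (1 - t) *\<^sub>R z)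
     \<le> t * psi F Lc tau x y + (1 - t) * psi F Lc tau x z - t * (1 - t) * (Lc / 2) * (norm (y - z))\<^sup>2"
proof -
  let ?w = "\<lambda>v. Fhat F x + Jac F x *v (v - x)"
  have lin: "linear ((*v) (Jac F x))" by (rule matrix_vector_mul_linear)
  have "t *\<^sub>R y + (1 - t) *\<^sub>R z - x = t *\<^sub>R (y - x) + (1 - t) *\<^sub>R (z - x)"
    by (simp add: algebra_simps)
  hence w: "?w (t *\<^sub>R y + (1 - t) *\<^sub>R z) = t *\<^sub>R ?w y + (1 - t) *\<^sub>R ?w z"
    by (simp add: linear_add[OF lin] linear_scale[OF lin] algebra_simps)
  have ph: "(phi F x (t *\<^sub>R y + (1 - t) *\<^sub>R z))\<^sup>2 \<le> t * (phi F x y)\<^sup>2 + (1 - t) * (phi F x z)\<^sup>2"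
    unfolding phi_def w norm_comb_sq using assms by (simp add: mult_nonneg_nonneg)
  have nn: "(norm (t *\<^sub>R y + (1 - t) *\<^sub>R z - x))\<^sup>2
     = t * (norm (y - x))\<^sup>2 + (1 - t) * (norm (z - x))\<^sup>2 - t * (1 - t) * (norm (y - z))\<^sup>2"
    using norm_comb_sq[of t "y - x" "z - x"] \<open>t *\<^sub>R y + (1 - t) *\<^sub>R z - x = _\<close> by simp
  have "(phi F x (t *\<^sub>R y + (1 - t) *\<^sub>R z))\<^sup>2 / (2 * tau)
     \<le> (t * (phi F x y)\<^sup>2 + (1 - t) * (phi F x z)\<^sup>2) / (2 * tau)"
    using ph assms by (simp add: divide_right_mono)
  also have "\<dots> = t * ((phi F x y)\<^sup>2 / (2 * tau)) + (1 - t) * ((phi F x z)\<^sup>2 / (2 * tau))"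
    by (simp add: add_divide_distrib)
  finally have A: "(phi F x (t *\<^sub>R y + (1 - t) *\<^sub>R z))\<^sup>2 / (2 * tau)
     \<le> t * ((phi F x y)\<^sup>2 / (2 * tau)) + (1 - t) * ((phi F x z)\<^sup>2 / (2 * tau))" .
  have B: "Lc / 2 * (norm (t *\<^sub>R y + (1 - t) *\<^sub>R z - x))\<^sup>2 =
     t * (Lc / 2 * (norm (y - x))\<^sup>2) + (1 - t) * (Lc / 2 * (norm (z - x))\<^sup>2) - t * (1 - t) * (Lc / 2) * (norm (y - z))\<^sup>2"
    unfolding nn by (simp add: field_simps)
  have C0: "(1 - t) * (tau / 2) = tau / 2 - t * (tau / 2)" by (simp add: left_diff_distrib)
  have C: "tau / 2 = t * (tau / 2) + (1 - t) * (tau / 2)" using C0 by linarith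
  show ?thesis unfolding psi_def by (rule lin_aux[OF eq_refl[OF C] A B])
qed

lemma T_min:
  assumes "0 < Lc" "0 < tau"
  shows "psi F Lc tau x (T F Lc tau x) \<le> psi F Lc tau x y"
proof -
  let ?p = "psi F Lc tau x"
  define R where "R = sqrt (2 * ?p x / Lc)"
  have px: "0 \<le> ?p x" using psi_ge[OF assms(2) less_imp_le[OF assms(1)], of x x F] by simp
  have R0: "0 \<le> R" unfolding R_def using px assms by simp
  have "\<exists>z\<in>cball x R. \<forall>w\<in>cball x R. ?p z \<le> ?p w"
    by (rule continuous_attains_inf)
      (use R0 continuous_on_subset[OF psi_cont[OF assms(2)]] in auto)
  then obtain z where z: "z \<in> cball x R" "\<And>w. w \<in> cball x R \<Longrightarrow> ?p z \<le> ?p w" by blast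
  have glob: "?p z \<le> ?p w" for w
  proof (cases "w \<in> cball x R")
    case True then show ?thesis using z by blast
  next
    case False
    then have "R < norm (w - x)" by (simp add: dist_norm norm_minus_commute)
    then have "R\<^sup>2 < (norm (w - x))\<^sup>2" using R0 by (simp add: power_strict_mono)
    moreover have "R\<^sup>2 = 2 * ?p x / Lc" unfolding R_def using px assms by simp
    ultimately have "2 * ?p x / Lc < (norm (w - x))\<^sup>2" by simp
    then have "?p x < Lc / 2 * (norm (w - x))\<^sup>2" using assms by (simp add: field_simps)
    also have "\<dots> \<le> ?p w" by (rule psi_ge[OF assms(2) less_imp_le[OF assms(1)]])
    finally have "?p x < ?p w" .
    moreover have "?p z \<le> ?p x" using z R0 by simp
    ultimately show ?thesis by simp
  qed
  have "is_arg_min ?p (\<lambda>_. True) z" unfolding is_arg_min_def using glob by (simp add: not_less)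
  then have "is_arg_min ?p (\<lambda>_. True) (T F Lc tau x)"
    unfolding T_def arg_min_def by (rule someI)
  then show ?thesis unfolding is_arg_min_def by (simp add: not_less)
qed

lemma lim_aux:
  fixes a b :: real
  assumes "\<And>t. 0 < t \<Longrightarrow> t < 1 \<Longrightarrow> (1 - t) * b \<le> a" "0 \<le> a"
  shows "b \<le> a"
proof (rule ccontr)
  assume "\<not> b \<le> a"
  then have ba: "a < b" by simp
  define t where "t = (b - a) / (2 * b)"
  have b0: "0 < b" using ba assms(2) by simp
  have "0 < t" "t < 1" unfolding t_def using ba b0 assms(2) by (auto simp: field_simps)
  then have "(1 - t) * b \<le> a" by (rule assms(1))
  moreover have "(1 - t) * b = (a + b) / 2" unfolding t_def using b0 by (simp add: field_simps)
  ultimately show False using ba by simp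
qed

lemma T_strong:
  assumes "0 < Lc" "0 < tau"
  shows "Lc / 2 * (norm (y - T F Lc tau x))\<^sup>2 \<le> psi F Lc tau x y - psi F Lc tau x (T F Lc tau x)"
proof (rule lim_aux)
  let ?p = "psi F Lc tau x" and ?z = "T F Lc tau x"
  show "0 \<le> ?p y - ?p ?z" using T_min[OF assms] by simp
  fix t :: real assume t: "0 < t" "t < 1"
  have "?p ?z \<le> ?p (t *\<^sub>R y + (1 - t) *\<^sub>R ?z)" by (rule T_min[OF assms])
  also have "\<dots> \<le> t * ?p y + (1 - t) * ?p ?z - t * (1 - t) * (Lc / 2) * (norm (y - ?z))\<^sup>2"
    by (rule psi_comb) (use t assms in auto)
  finally have "t * ((1 - t) * (Lc / 2 * (norm (y - ?z))\<^sup>2)) \<le> t * (?p y - ?p ?z)"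
    by (simp add: algebra_simps)
  then show "(1 - t) * (Lc / 2 * (norm (y - ?z))\<^sup>2) \<le> ?p y - ?p ?z"
    using t by simp
qed

lemma kappa_bound:
  fixes c s A :: real
  assumes "0 < c" "0 \<le> s" "\<And>t. 0 \<le> t \<Longrightarrow> t \<le> 1 \<Longrightarrow> t * s - t\<^sup>2 * c \<le> A"
  shows "2 * c * kappa (s / (2 * c)) \<le> A"
proof (cases "s / (2 * c) \<le> 1")
  case True
  have "s / (2 * c) * s - (s / (2 * c))\<^sup>2 * c \<le> A"
    by (rule assms(3)) (use True assms in auto)
  moreover have "s / (2 * c) * s - (s / (2 * c))\<^sup>2 * c = 2 * c * ((s / (2 * c))\<^sup>2 / 2)"
    using assms(1) by (simp add: field_simps power2_eq_square)
  ultimately show ?thesis using True unfolding kappa_def by simp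
next
  case False
  have "1 * s - 1\<^sup>2 * c \<le> A" by (rule assms(3)) auto
  moreover have "2 * c * (s / (2 * c) - 1 / 2) = s - c" using assms(1) by (simp add: field_simps)
  ultimately show ?thesis using False unfolding kappa_def by simp
qed

lemma arith_d:
  fixes a P q t LF N :: real
  assumes "0 < a" "P \<le> t * (a / 2 + q / (2 * a) + LF * N) + (1 - t) * a - t * (1 - t) * (2 * LF / 2) * N"
  shows "P \<le> a - t * ((a\<^sup>2 - q) / (2 * a)) + t\<^sup>2 * (LF * N)"
proof -
  have e: "(a\<^sup>2 - q) / (2 * a) = a / 2 - q / (2 * a)" using assms(1)
    by (simp add: diff_divide_distrib power2_eq_square)
  have "t * (a / 2 + q / (2 * a) + LF * N) + (1 - t) * a - t * (1 - t) * (2 * LF / 2) * N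
     = a - t * (a / 2 - q / (2 * a)) + t\<^sup>2 * (LF * N)"
    by (simp add: algebra_simps power2_eq_square)
  then show ?thesis using assms(2) e by simp
qed

lemma delta_step:
  assumes tau: "0 < f1 F x" and r: "0 < r" and LF: "0 < LF"
  shows "0 \<le> Delta F r x \<and> (\<forall>t. 0 \<le> t \<longrightarrow> t \<le> 1 \<longrightarrow> (\<exists>y. psi F (2 * LF) (f1 F x) x y
     \<le> f1 F x - t * (Delta F r x / (2 * f1 F x)) + t\<^sup>2 * (LF * r\<^sup>2)))"
proof -
  let ?tau = "f1 F x"
  let ?q = "\<lambda>y. (phi F x y)\<^sup>2"
  have cq: "continuous_on (cball x r) ?q"
    unfolding phi_def
    by (intro continuous_intros matrix_vector_mult_linear_continuous_on[THEN continuous_on_compose2]) auto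
  have "\<exists>y0\<in>cball x r. \<forall>w\<in>cball x r. ?q y0 \<le> ?q w"
    by (rule continuous_attains_inf) (use r cq in auto)
  then obtain y0 where y0: "y0 \<in> cball x r" "\<And>w. w \<in> cball x r \<Longrightarrow> ?q y0 \<le> ?q w" by blast
  have inf: "(INF y\<in>cball x r. ?q y) = ?q y0"
    by (rule cInf_eq_minimum) (use y0 in auto)
  have D: "Delta F r x = ?tau\<^sup>2 - ?q y0" unfolding Delta_def inf f2_def ..
  have phx: "phi F x x = ?tau" by (simp add: phi_def f1_def)
  have "?q y0 \<le> ?q x" using y0 r by simp
  then have D0: "0 \<le> Delta F r x" unfolding D phx by simp
  have N: "(norm (y0 - x))\<^sup>2 \<le> r\<^sup>2" using y0(1) r
    by (simp add: dist_norm norm_minus_commute power_mono)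
  have main: "psi F (2 * LF) ?tau x (t *\<^sub>R y0 + (1 - t) *\<^sub>R x)
     \<le> ?tau - t * (Delta F r x / (2 * ?tau)) + t\<^sup>2 * (LF * r\<^sup>2)" if t: "0 \<le> t" "t \<le> 1" for t
  proof -
    have "psi F (2 * LF) ?tau x (t *\<^sub>R y0 + (1 - t) *\<^sub>R x)
      \<le> t * psi F (2 * LF) ?tau x y0 + (1 - t) * psi F (2 * LF) ?tau x x
        - t * (1 - t) * (2 * LF / 2) * (norm (y0 - x))\<^sup>2"
      by (rule psi_comb) (use t tau in auto)
    also have "psi F (2 * LF) ?tau x x = ?tau" by (rule psi_at_x[OF tau])
    also have "psi F (2 * LF) ?tau x y0 = ?tau / 2 + ?q y0 / (2 * ?tau) + LF * (norm (y0 - x))\<^sup>2"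
      unfolding psi_def by simp
    finally have "psi F (2 * LF) ?tau x (t *\<^sub>R y0 + (1 - t) *\<^sub>R x)
       \<le> ?tau - t * ((?tau\<^sup>2 - ?q y0) / (2 * ?tau)) + t\<^sup>2 * (LF * (norm (y0 - x))\<^sup>2)"
      by (rule arith_d[OF tau])
    also have "t\<^sup>2 * (LF * (norm (y0 - x))\<^sup>2) \<le> t\<^sup>2 * (LF * r\<^sup>2)"
      using N LF by (intro mult_left_mono) auto
    finally show ?thesis unfolding D by simp
  qed
  show ?thesis using D0 main by blast
qed

lemma avg_aux:
  fixes v d :: "nat \<Rightarrow> real"
  assumes "0 < k" "\<And>i. i < k \<Longrightarrow> v i \<le> C * (d i - d (Suc i) + e)"
  shows "Min (v ` {..<k}) \<le> C * (e + (d 0 - d k) / real k)"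
proof -
  let ?m = "Min (v ` {..<k})"
  have "\<And>i. i < k \<Longrightarrow> ?m \<le> v i" by (rule Min_le) auto
  then have le: "\<And>i. i \<in> {..<k} \<Longrightarrow> ?m \<le> C * (d i - d (Suc i) + e)"
    using assms(2) by (meson lessThan_iff order_trans)
  have "(\<Sum>i<k. ?m) \<le> (\<Sum>i<k. C * (d i - d (Suc i) + e))"
    by (rule sum_mono) (rule le)
  also have "\<dots> = C * (\<Sum>i<k. (d i - d (Suc i) + e))"
    by (rule sum_distrib_left[symmetric])
  also have "(\<Sum>i<k. (d i - d (Suc i) + e)) = (\<Sum>i<k. d i - d (Suc i)) + real k * e"
    by (simp add: sum.distrib)
  also have "(\<Sum>i<k. d i - d (Suc i)) = d 0 - d k" by (rule sum_lessThan_telescope')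
  finally have "real k * ?m \<le> C * (d 0 - d k + real k * e)" by simp
  then have "?m \<le> C * (d 0 - d k + real k * e) / real k" using assms(1)
    by (subst pos_le_divide_eq) (auto simp: mult.commute)
  also have "C * (d 0 - d k + real k * e) / real k = C * ((d 0 - d k + real k * e) / real k)"
    by simp
  also have "(d 0 - d k + real k * e) / real k = e + (d 0 - d k) / real k"
    using assms(1) by (simp add: add_divide_distrib)
  finally show ?thesis .
qed

theorem theorem1:
  fixes F :: "real^'n \<Rightarrow> real^'m" and FF :: "(real^'n) set"
    and L LF eps r :: real and xs :: "nat \<Rightarrow> real^'n" and k :: nat
  assumes "closed FF" and "convex FF" and "interior FF \<noteq> {}"
    and "\<forall>x. F differentiable (at x)"
    and "\<forall>x\<in>FF. \<forall>y\<in>FF. frob (Jac F y - Jac F x) \<le> LF * norm (y - x)"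
    and "0 < L" and "L \<le> LF" and "0 \<le> eps"
    and "{x. f1 F x \<le> f1 F (xs 0)} \<subseteq> FF"
    and "\<forall>i. xs i \<in> FF"
    and "scheme1 F L LF eps xs"
    and "0 < k" and "0 < r"
  shows "(8 * LF\<^sup>2 / L * (eps + (f1 F (xs 0) - f1 F (xs k)) / real k)
           \<ge> Min ((\<lambda>i. (norm ((2 * LF) *\<^sub>R (T F (2 * LF) (f1 F (xs i)) (xs i) - xs i)))\<^sup>2) ` {..<k})) \<and>
         (LF * (eps + (f1 F (xs 0) - f1 F (xs k)) / real k)
           \<ge> Min ((\<lambda>i. 2 * (LF * r)\<^sup>2 * kappa (Delta F r (xs i) / (4 * f1 F (xs i) * LF * r\<^sup>2))) ` {..<k}))"
proof -
  let ?g = "\<lambda>l::real. min (2 * l) (2 * LF)"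
  have L0: "0 < L" and LLF: "L \<le> LF" and e0: "0 \<le> eps" and r0: "0 < r" and k0: "0 < k"
    using assms by auto
  have LF0: "0 < LF" using L0 LLF by simp
  have iter: "L \<le> (?g ^^ j) l \<and> (?g ^^ j) l \<le> 2 * LF" if "L \<le> l" "l \<le> 2 * LF" for j l
  proof (induction j)
    case 0 then show ?case using that by simp
  next
    case (Suc j) then show ?case using L0 LLF by auto
  qed
  from assms(11) obtain Ls :: "nat \<Rightarrow> real" where Ls0: "Ls 0 = L" and
    H: "\<forall>k. 0 < f1 F (xs k) \<and>
        (\<exists>j::nat.
          (\<forall>i<j. \<exists>z. step2_ok F ((?g ^^ i) (Ls k)) (f1 F (xs k)) eps (xs k) z
                    \<and> f1 F z > psi F ((?g ^^ i) (Ls k)) (f1 F (xs k)) (xs k) z) \<and>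
          step2_ok F ((?g ^^ j) (Ls k)) (f1 F (xs k)) eps (xs k) (xs (Suc k)) \<and>
          f1 F (xs (Suc k)) \<le> psi F ((?g ^^ j) (Ls k)) (f1 F (xs k)) (xs k) (xs (Suc k)) \<and>
          Ls (Suc k) = max (((?g ^^ j) (Ls k)) / 2) L)"
    unfolding scheme1_def by blast
  have pos: "0 < f1 F (xs i)" for i using H by blast
  have Lsb: "L \<le> Ls i \<and> Ls i \<le> LF" for i
  proof (induction i)
    case 0 then show ?case using Ls0 LLF by simp
  next
    case (Suc i)
    from H obtain j where j: "Ls (Suc i) = max (((?g ^^ j) (Ls i)) / 2) L" by blast
    have "Ls i \<le> 2 * LF" using Suc LF0 by simp
    then have "(?g ^^ j) (Ls i) \<le> 2 * LF" using iter[of "Ls i" j] Suc by blast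
    then show ?case using j LLF by simp
  qed
  have step: "f1 F (xs (Suc i)) \<le> psi F (2 * LF) (f1 F (xs i)) (xs i) y + eps" for i y
  proof -
    from H obtain j where
      s2: "step2_ok F ((?g ^^ j) (Ls i)) (f1 F (xs i)) eps (xs i) (xs (Suc i))" and
      fle: "f1 F (xs (Suc i)) \<le> psi F ((?g ^^ j) (Ls i)) (f1 F (xs i)) (xs i) (xs (Suc i))"
      by blast
    define Lt where "Lt = (?g ^^ j) (Ls i)"
    have Lt: "L \<le> Lt" "Lt \<le> 2 * LF" unfolding Lt_def using iter[of "Ls i" j] Lsb[of i] LF0 by auto
    have Lt0: "0 < Lt" using Lt L0 by simp
    have "psi F Lt (f1 F (xs i)) (xs i) (xs (Suc i)) - psi F Lt (f1 F (xs i)) (xs i) (T F Lt (f1 F (xs i)) (xs i)) \<le> eps"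
      using s2 unfolding step2_ok_def Lt_def by blast
    moreover have "psi F Lt (f1 F (xs i)) (xs i) (T F Lt (f1 F (xs i)) (xs i)) \<le> psi F Lt (f1 F (xs i)) (xs i) y"
      by (rule T_min[OF Lt0 pos])
    moreover have "psi F Lt (f1 F (xs i)) (xs i) y \<le> psi F (2 * LF) (f1 F (xs i)) (xs i) y"
      by (rule psi_mono_L[OF Lt(2)])
    ultimately show ?thesis using fle unfolding Lt_def by linarith
  qed
  have part1: "(norm ((2 * LF) *\<^sub>R (T F (2 * LF) (f1 F (xs i)) (xs i) - xs i)))\<^sup>2
      \<le> 8 * LF\<^sup>2 / L * (f1 F (xs i) - f1 F (xs (Suc i)) + eps)" for i
  proof -
    let ?tau = "f1 F (xs i)" and ?x = "xs i"
    let ?z = "T F (2 * LF) ?tau ?x"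
    define D where "D = ?tau - f1 F (xs (Suc i)) + eps"
    have "2 * LF / 2 * (norm (?x - ?z))\<^sup>2 \<le> psi F (2 * LF) ?tau ?x ?x - psi F (2 * LF) ?tau ?x ?z"
      by (rule T_strong) (use LF0 pos in auto)
    moreover have "psi F (2 * LF) ?tau ?x ?x = ?tau" by (rule psi_at_x[OF pos])
    moreover have "f1 F (xs (Suc i)) \<le> psi F (2 * LF) ?tau ?x ?z + eps" by (rule step)
    moreover have "norm (?x - ?z) = norm (?z - ?x)" by (rule norm_minus_commute)
    ultimately have A: "LF * (norm (?z - ?x))\<^sup>2 \<le> D" unfolding D_def
      by simp
    have "0 \<le> LF * (norm (?z - ?x))\<^sup>2" using LF0 by simp
    then have D0: "0 \<le> D" using A by linarith
    have nz: "norm ((2 * LF) *\<^sub>R (?z - ?x)) = 2 * LF * norm (?z - ?x)" using LF0 by simp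
    have "(2 * LF * norm (?z - ?x))\<^sup>2 = 4 * LF * (LF * (norm (?z - ?x))\<^sup>2)"
      by (simp add: power_mult_distrib power2_eq_square)
    then have "(norm ((2 * LF) *\<^sub>R (?z - ?x)))\<^sup>2 = 4 * LF * (LF * (norm (?z - ?x))\<^sup>2)"
      unfolding nz .
    also have "\<dots> \<le> 4 * LF * D" using A LF0 by simp
    also have "\<dots> \<le> 8 * LF\<^sup>2 / L * D"
    proof (rule mult_right_mono[OF _ D0])
      have "4 * LF * L \<le> 8 * LF\<^sup>2" using LLF LF0 L0 by (simp add: power2_eq_square)
      then show "4 * LF \<le> 8 * LF\<^sup>2 / L" using L0 by (simp add: pos_le_divide_eq)
    qed
    finally show ?thesis unfolding D_def .
  qed
  have part2: "2 * (LF * r)\<^sup>2 * kappa (Delta F r (xs i) / (4 * f1 F (xs i) * LF * r\<^sup>2))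
      \<le> LF * (f1 F (xs i) - f1 F (xs (Suc i)) + eps)" for i
  proof -
    let ?tau = "f1 F (xs i)" and ?x = "xs i"
    define D where "D = ?tau - f1 F (xs (Suc i)) + eps"
    define s where "s = Delta F r ?x / (2 * ?tau)"
    define c where "c = LF * r\<^sup>2"
    have c0: "0 < c" unfolding c_def using LF0 r0 by simp
    note ds = delta_step[OF pos[of i] r0 LF0]
    have "0 \<le> Delta F r ?x" using ds by (rule conjunct1)
    then have s0: "0 \<le> s" unfolding s_def using pos[of i] by simp
    have "t * s - t\<^sup>2 * c \<le> D" if "0 \<le> t" "t \<le> 1" for t
    proof -
      have "\<forall>t. 0 \<le> t \<longrightarrow> t \<le> 1 \<longrightarrow> (\<exists>y. psi F (2 * LF) ?tau ?x y
         \<le> ?tau - t * (Delta F r ?x / (2 * ?tau)) + t\<^sup>2 * (LF * r\<^sup>2))" using ds by (rule conjunct2)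
      then have "\<exists>y. psi F (2 * LF) ?tau ?x y \<le> ?tau - t * s + t\<^sup>2 * c"
        unfolding s_def c_def using that by blast
      then obtain y where y: "psi F (2 * LF) ?tau ?x y \<le> ?tau - t * s + t\<^sup>2 * c" by blast
      show ?thesis using y step[of i y] unfolding D_def by linarith
    qed
    then have K: "2 * c * kappa (s / (2 * c)) \<le> D" by (rule kappa_bound[OF c0 s0])
    have "s / (2 * c) = Delta F r ?x / (4 * ?tau * LF * r\<^sup>2)"
    proof -
      have "s / (2 * c) = Delta F r ?x / ((2 * ?tau) * (2 * (LF * r\<^sup>2)))"
        unfolding s_def c_def by (rule divide_divide_eq_left)
      also have "(2 * ?tau) * (2 * (LF * r\<^sup>2)) = 4 * ?tau * LF * r\<^sup>2" by simp
      finally show ?thesis .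
    qed
    moreover have "2 * (LF * r)\<^sup>2 = LF * (2 * c)" unfolding c_def
      by (simp add: power2_eq_square)
    ultimately have "2 * (LF * r)\<^sup>2 * kappa (Delta F r ?x / (4 * ?tau * LF * r\<^sup>2))
       = LF * (2 * c * kappa (s / (2 * c)))" by (simp only: mult.assoc)
    also have "\<dots> \<le> LF * D" using K LF0 by simp
    finally show ?thesis unfolding D_def .
  qed
  show ?thesis
  proof
    show "8 * LF\<^sup>2 / L * (eps + (f1 F (xs 0) - f1 F (xs k)) / real k)
           \<ge> Min ((\<lambda>i. (norm ((2 * LF) *\<^sub>R (T F (2 * LF) (f1 F (xs i)) (xs i) - xs i)))\<^sup>2) ` {..<k})"
      using avg_aux[where d="\<lambda>i. f1 F (xs i)", OF k0 part1] by simp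
    show "LF * (eps + (f1 F (xs 0) - f1 F (xs k)) / real k)
           \<ge> Min ((\<lambda>i. 2 * (LF * r)\<^sup>2 * kappa (Delta F r (xs i) / (4 * f1 F (xs i) * LF * r\<^sup>2))) ` {..<k})"
      using avg_aux[where d="\<lambda>i. f1 F (xs i)", OF k0 part2] by simp
  qed
qed

end
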